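(* Let $K$ be a field of characteristic $\neq2$ and let $\tau=(-1,1,1,-1)$ or $\tau=(1,-1,-1,1)$. Then $\mathrm{Aut}\,A_\tau=G_3$, where $$G_3=\{\varphi\in\mathrm{Aut}\,K\langle x_1,x_2\rangle\mid \varphi=(\alpha_1x_1,\beta_2x_2)\ \text{or}\ \varphi=(\beta_1x_2,\alpha_2x_1),\ \alpha_1,\beta_2,\alpha_2,\beta_1\in K^*\}.$$
   Context: $A=K\langle x_1,x_2\rangle$ is the free associative algebra with unit on $x_1,x_2$; $\varphi=(f_1,f_2)$ denotes the algebra endomorphism with $\varphi(x_1)=f_1$, $\varphi(x_2)=f_2$. For $q_{ij}\in K$, the diagonal braiding $\tau=(q_{11},q_{12},q_{21},q_{22})$ on $A$ is the linear map $A\otimes A\to A\otimes A$ given on words $u,v$ by $(u\otimes v)\tau=q_{11}^{s_1t_1}q_{12}^{s_1t_2}q_{21}^{s_2t_1}q_{22}^{s_2t_2}\,(v\otimes u)$, where $s_i$ (resp. $t_i$) is the number of occurrences of $x_i$ in $u$ (resp. $v$). $A_\tau$ is $A$ equipped with $\tau$, and $\mathrm{Aut}\,A_\tau$ is the group of algebra automorphisms $\varphi$ of $A$ satisfying $(\varphi\otimes\varphi)((w)\tau)=((\varphi\otimes\varphi)(w))\tau$ for all $w\in A\otimes A$, viewed as a subgroup of $\mathrm{Aut}\,K\langle x_1,x_2\rangle$. *)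

theory Defs
  imports Main
begin

text \<open>The free associative algebra K<x1,x2> is modelled concretely: an element is a
  finitely supported coefficient function on words over the two letters X1, X2.
  The tensor product A \<otimes> A is modelled as finitely supported coefficient functions
  on pairs of words (basis u \<otimes> v).\<close>

datatype var = X1 | X2

type_synonym word = "var list"

definition fa_elem :: "(word \<Rightarrow> 'k::zero) \<Rightarrow> bool" where
  "fa_elem p \<longleftrightarrow> finite {w. p w \<noteq> 0}"

definition tens_elem :: "(word \<times> word \<Rightarrow> 'k::zero) \<Rightarrow> bool" where
  "tens_elem t \<longleftrightarrow> finite {uv. t uv \<noteq> 0}"

definition fa_one :: "word \<Rightarrow> 'k::{zero,one}" where
  "fa_one = (\<lambda>w. if w = [] then 1 else 0)"

definition fa_var :: "var \<Rightarrow> word \<Rightarrow> 'k::{zero,one}" where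
  "fa_var i = (\<lambda>w. if w = [i] then 1 else 0)"

definition fa_smult :: "'k::times \<Rightarrow> (word \<Rightarrow> 'k) \<Rightarrow> word \<Rightarrow> 'k" where
  "fa_smult c p = (\<lambda>w. c * p w)"

definition fa_mult :: "(word \<Rightarrow> 'k::comm_semiring_0) \<Rightarrow> (word \<Rightarrow> 'k) \<Rightarrow> word \<Rightarrow> 'k" where
  "fa_mult p q = (\<lambda>w. \<Sum>(u,v)\<in>{(u,v). u @ v = w}. p u * q v)"

definition fa_subst_word :: "(var \<Rightarrow> word \<Rightarrow> 'k::comm_semiring_1) \<Rightarrow> word \<Rightarrow> word \<Rightarrow> 'k" where
  "fa_subst_word f w = foldr (\<lambda>a acc. fa_mult (f a) acc) w fa_one"

text \<open>The algebra endomorphism \<phi> = (f X1, f X2) of K<x1,x2>, applied to an element.\<close>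
definition fa_apply :: "(var \<Rightarrow> word \<Rightarrow> 'k::comm_semiring_1) \<Rightarrow> (word \<Rightarrow> 'k) \<Rightarrow> word \<Rightarrow> 'k" where
  "fa_apply f p = (\<lambda>z. \<Sum>w\<in>{w. p w \<noteq> 0}. p w * fa_subst_word f w z)"

definition tens_apply :: "(var \<Rightarrow> word \<Rightarrow> 'k::comm_semiring_1) \<Rightarrow> (word \<times> word \<Rightarrow> 'k) \<Rightarrow> word \<times> word \<Rightarrow> 'k" where
  "tens_apply f t = (\<lambda>(z1,z2). \<Sum>(u,v)\<in>{uv. t uv \<noteq> 0}.
      t (u,v) * fa_subst_word f u z1 * fa_subst_word f v z2)"

definition cnt :: "var \<Rightarrow> word \<Rightarrow> nat" where
  "cnt i w = length (filter (\<lambda>a. a = i) w)"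

definition braid_coeff :: "(var \<Rightarrow> var \<Rightarrow> 'k::comm_monoid_mult) \<Rightarrow> word \<Rightarrow> word \<Rightarrow> 'k" where
  "braid_coeff Q u v = (\<Prod>i\<in>(UNIV::var set). \<Prod>j\<in>(UNIV::var set). Q i j ^ (cnt i u * cnt j v))"

text \<open>The diagonal braiding \<tau>: (u \<otimes> v)\<tau> = q(u,v) (v \<otimes> u), extended linearly.\<close>
definition braid :: "(var \<Rightarrow> var \<Rightarrow> 'k::comm_semiring_1) \<Rightarrow> (word \<times> word \<Rightarrow> 'k) \<Rightarrow> word \<times> word \<Rightarrow> 'k" where
  "braid Q t = (\<lambda>(a,b). braid_coeff Q b a * t (b,a))"

definition fa_aut :: "(var \<Rightarrow> word \<Rightarrow> 'k::comm_semiring_1) \<Rightarrow> bool" where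
  "fa_aut f \<longleftrightarrow> (\<forall>i. fa_elem (f i)) \<and>
     bij_betw (fa_apply f) {p. fa_elem p} {p. fa_elem p}"

definition aut_braided :: "(var \<Rightarrow> var \<Rightarrow> 'k::comm_semiring_1) \<Rightarrow> (var \<Rightarrow> word \<Rightarrow> 'k) set" where
  "aut_braided Q = {f. fa_aut f \<and>
     (\<forall>t. tens_elem t \<longrightarrow> tens_apply f (braid Q t) = braid Q (tens_apply f t))}"

definition G3 :: "(var \<Rightarrow> word \<Rightarrow> 'k::field) set" where
  "G3 = {f. fa_aut f \<and>
     ((\<exists>a1 b2. a1 \<noteq> 0 \<and> b2 \<noteq> 0 \<and> f X1 = fa_smult a1 (fa_var X1) \<and> f X2 = fa_smult b2 (fa_var X2)) \<or>
      (\<exists>b1 a2. b1 \<noteq> 0 \<and> a2 \<noteq> 0 \<and> f X1 = fa_smult b1 (fa_var X2) \<and> f X2 = fa_smult a2 (fa_var X1)))}"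

definition tau_of :: "'k \<Rightarrow> 'k \<Rightarrow> 'k \<Rightarrow> 'k \<Rightarrow> var \<Rightarrow> var \<Rightarrow> 'k" where
  "tau_of q11 q12 q21 q22 = (\<lambda>i j. case (i, j) of
      (X1, X1) \<Rightarrow> q11 | (X1, X2) \<Rightarrow> q12 | (X2, X1) \<Rightarrow> q21 | (X2, X2) \<Rightarrow> q22)"

end

theory Submission
  imports Defs
begin


lemma UNIV_var: "(UNIV::var set) = {X1, X2}"
  using var.exhaust by auto

lemma cnt_append[simp]: "cnt i (u @ v) = cnt i u + cnt i v"
  by (simp add: cnt_def)
lemma cnt_Nil[simp]: "cnt i [] = 0" by (simp add: cnt_def)
lemma cnt_Cons[simp]: "cnt i (a # w) = (if a = i then 1 else 0) + cnt i w"
  by (simp add: cnt_def)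

lemma splits_finite: "finite {(u,v). u @ v = (w::'a list)}"
proof -
  have "{(u,v). u @ v = w} \<subseteq> (\<lambda>i. (take i w, drop i w)) ` {..length w}"
  proof
    fix x assume "x \<in> {(u,v). u @ v = w}"
    then obtain u v where x: "x = (u,v)" "u @ v = w" by auto
    then show "x \<in> (\<lambda>i. (take i w, drop i w)) ` {..length w}"
      by (intro image_eqI[of _ _ "length u"]) auto
  qed
  then show ?thesis by (rule finite_subset) auto
qed

lemma subst_Nil[simp]: "fa_subst_word f [] = fa_one"
  by (simp add: fa_subst_word_def)
lemma subst_Cons[simp]: "fa_subst_word f (a # w) = fa_mult (f a) (fa_subst_word f w)"
  by (simp add: fa_subst_word_def)

lemma fa_mult_one: "fa_mult p (fa_one :: word \<Rightarrow> 'k::comm_semiring_1) = p"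
proof
  fix w
  have "fa_mult p fa_one w = (\<Sum>uv\<in>{(u,v). u @ v = w}. if uv = (w,[]) then p w else 0)"
    unfolding fa_mult_def fa_one_def by (rule sum.cong) (auto split: if_splits)
  also have "\<dots> = p w" using sum.delta[OF splits_finite[of w], of "(w,[])" "\<lambda>_. p w"]
    by simp
  finally show "fa_mult p fa_one w = p w" .
qed

lemma subst_single[simp]: "fa_subst_word f [a] = f a"
  by (simp add: fa_mult_one)

lemma fa_mult_delta:
  "fa_mult (\<lambda>w. if w = x then (\<alpha>::'k::comm_semiring_1) else 0) (\<lambda>w. if w = y then \<beta> else 0)
   = (\<lambda>w. if w = x @ y then \<alpha> * \<beta> else 0)"
proof
  fix w
  have "fa_mult (\<lambda>w. if w = x then \<alpha> else 0) (\<lambda>w. if w = y then \<beta> else 0) w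
     = (\<Sum>uv\<in>{(u,v). u @ v = w}. if uv = (x,y) then \<alpha> * \<beta> else 0)"
    unfolding fa_mult_def by (rule sum.cong) (auto split: if_splits)
  also have "\<dots> = (if w = x @ y then \<alpha> * \<beta> else 0)"
    using sum.delta[OF splits_finite[of w], of "(x,y)" "\<lambda>_. \<alpha> * \<beta>"]
    by auto
  finally show "fa_mult (\<lambda>w. if w = x then \<alpha> else 0) (\<lambda>w. if w = y then \<beta> else 0) w
     = (if w = x @ y then \<alpha> * \<beta> else 0)" .
qed

lemma minus_one_pow: "(-1::'k::ring_1) ^ n = (if even n then 1 else -1)"
  by (rule minus_one_power_iff)

lemma bc1: "braid_coeff (tau_of (-1) 1 1 (-1)) u v
   = (-1::'k::comm_ring_1) ^ (cnt X1 u * cnt X1 v + cnt X2 u * cnt X2 v)"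
  by (simp add: braid_coeff_def UNIV_var tau_of_def power_add)

lemma bc2: "braid_coeff (tau_of 1 (-1) (-1) 1) u v
   = (-1::'k::comm_ring_1) ^ (cnt X1 u * cnt X2 v + cnt X2 u * cnt X1 v)"
  by (simp add: braid_coeff_def UNIV_var tau_of_def power_add)



fun code :: "var \<Rightarrow> nat" where "code X1 = 0" | "code X2 = 1"

fun val :: "word \<Rightarrow> nat" where
  "val [] = 0"
| "val (a # w) = code a * 2 ^ length w + val w"

definition key :: "word \<Rightarrow> nat" where "key w = 2 ^ length w + val w"

lemma code_le: "code a \<le> 1" by (cases a) auto

lemma val_lt: "val w < 2 ^ length w"
proof (induction w)
  case Nil then show ?case by simp
next
  case (Cons a w)
  have "code a * 2 ^ length w \<le> 2 ^ length w" using code_le[of a] by simp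
  moreover have "(2::nat) ^ length (a # w) = 2 ^ length w + 2 ^ length w" by simp
  ultimately show ?case using Cons.IH by (simp only: val.simps)
qed

lemma val_append: "val (u @ v) = val u * 2 ^ length v + val v"
  by (induction u) (auto simp: algebra_simps power_add)

lemma key_append: "key (u @ v) = key u * 2 ^ length v + val v"
  by (simp add: key_def val_append algebra_simps power_add)

lemma key_ge1: "key u \<ge> 1" unfolding key_def
proof -
  have "(1::nat) \<le> 2 ^ length u" by simp
  then show "1 \<le> 2 ^ length u + val u" by linarith
qed

lemma key_length_less: assumes "length u < length v" shows "key u < key v"
proof -
  have "key u < 2 * 2 ^ length u" using val_lt[of u] by (simp add: key_def)
  also have "\<dots> = 2 ^ Suc (length u)" by simp
  also have "\<dots> \<le> 2 ^ length v" using assms by (intro power_increasing) auto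
  also have "\<dots> \<le> key v" by (simp add: key_def)
  finally show ?thesis .
qed

lemma key_le_length: "key u \<le> key v \<Longrightarrow> length u \<le> length v"
  using key_length_less[of v u] by linarith

lemma val_inj: "length u = length v \<Longrightarrow> val u = val v \<Longrightarrow> u = v"
proof (induction u arbitrary: v)
  case Nil then show ?case by simp
next
  case (Cons a u)
  then obtain b v' where v: "v = b # v'" "length v' = length u" by (cases v) auto
  have e: "code a * 2 ^ length u + val u = code b * 2 ^ length u + val v'"
    using Cons.prems v by simp
  have lu: "val u < 2 ^ length u" and lv: "val v' < 2 ^ length u" using val_lt[of u] val_lt[of v'] v by auto
  have "code a = code b"
  proof (rule ccontr)
    assume "code a \<noteq> code b"
    then have "(code a = 0 \<and> code b = 1) \<or> (code a = 1 \<and> code b = 0)"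
      using code_le[of a] code_le[of b] by auto
    then show False using e lu lv by auto
  qed
  then have "a = b" by (cases a; cases b) auto
  moreover have "val u = val v'" using e \<open>code a = code b\<close> by simp
  ultimately show ?case using Cons.IH v by auto
qed

lemma key_inj: assumes "key u = key v" shows "u = v"
proof -
  have "length u = length v" using key_le_length[of u v] key_le_length[of v u] assms by simp
  then show ?thesis using assms val_inj by (simp add: key_def)
qed

lemma key_mono:
  assumes "key u \<le> key u'" "key v \<le> key v'"
  shows "key (u @ v) \<le> key (u' @ v') \<and> (key (u @ v) = key (u' @ v') \<longrightarrow> u = u' \<and> v = v')"
proof (cases "length v = length v'")
  case True
  have vv: "val v \<le> val v'" using assms(2) True by (simp add: key_def)
  have a: "key u * 2 ^ length v \<le> key u' * 2 ^ length v" using assms(1) by simp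
  show ?thesis
  proof
    show "key (u @ v) \<le> key (u' @ v')" using a vv True by (simp add: key_append add_mono)
    show "key (u @ v) = key (u' @ v') \<longrightarrow> u = u' \<and> v = v'"
    proof
      assume e: "key (u @ v) = key (u' @ v')"
      then have "key u * 2 ^ length v + val v = key u' * 2 ^ length v + val v'"
        using True by (simp add: key_append)
      then have "key u * 2 ^ length v = key u' * 2 ^ length v" and "val v = val v'" using a vv by linarith+
      then have "key u = key u'" by simp
      then show "u = u' \<and> v = v'" using key_inj \<open>val v = val v'\<close> True val_inj by blast
    qed
  qed
next
  case False
  then have lt: "length v < length v'" using key_le_length[OF assms(2)] by simp
  have "key (u @ v) < key u * 2 ^ length v + 2 ^ length v"
    using val_lt[of v] by (simp add: key_append)
  also have "\<dots> \<le> key u * 2 ^ length v + key u * 2 ^ length v" using key_ge1[of u] by simp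
  also have "\<dots> = key u * 2 ^ Suc (length v)" by simp
  also have "\<dots> \<le> key u * 2 ^ length v'" using lt by (intro mult_left_mono power_increasing) auto
  also have "\<dots> \<le> key u' * 2 ^ length v'" using assms(1) by simp
  also have "\<dots> \<le> key (u' @ v')" by (simp add: key_append)
  finally show ?thesis by simp
qed



lemma mult_lead:
  fixes p q :: "word \<Rightarrow> 'k::comm_semiring_1"
  assumes p: "\<And>u. p u \<noteq> 0 \<Longrightarrow> key u \<le> key a" and q: "\<And>v. q v \<noteq> 0 \<Longrightarrow> key v \<le> key b"
  shows "fa_mult p q w \<noteq> 0 \<Longrightarrow> key w \<le> key (a @ b)"
    and "fa_mult p q (a @ b) = p a * q b"
proof -
  assume "fa_mult p q w \<noteq> 0"
  then obtain uv where uv: "uv \<in> {(u,v). u @ v = w}" "(case uv of (u,v) \<Rightarrow> p u * q v) \<noteq> 0"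
    unfolding fa_mult_def by (meson sum.not_neutral_contains_not_neutral)
  obtain u v where "uv = (u,v)" by (cases uv)
  with uv have "w = u @ v" "p u \<noteq> 0" "q v \<noteq> 0" by auto
  then show "key w \<le> key (a @ b)" using key_mono[OF p q] by blast
next
  have "fa_mult p q (a @ b) = (\<Sum>uv\<in>{(u,v). u @ v = a @ b}. if uv = (a,b) then p a * q b else 0)"
    unfolding fa_mult_def
  proof (rule sum.cong)
    fix x assume x: "x \<in> {(u,v). u @ v = a @ b}"
    obtain u v where xe: "x = (u,v)" by (cases x)
    show "(case x of (u, v) \<Rightarrow> p u * q v) = (if x = (a,b) then p a * q b else 0)"
    proof (cases "p u * q v = 0")
      case False
      then have "p u \<noteq> 0" "q v \<noteq> 0" by auto
      then have "u = a \<and> v = b" using key_mono[OF p q, of u v] x xe by auto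
      then show ?thesis using xe by simp
    next
      case True then show ?thesis using xe by auto
    qed
  qed simp
  also have "\<dots> = p a * q b" using sum.delta[OF splits_finite[of "a @ b"], of "(a,b)" "\<lambda>_. p a * q b"]
    by simp
  finally show "fa_mult p q (a @ b) = p a * q b" .
qed

lemma subst_lead:
  fixes f :: "var \<Rightarrow> word \<Rightarrow> 'k::comm_semiring_1"
  assumes ld: "\<And>a u. f a u \<noteq> 0 \<Longrightarrow> key u \<le> key (ld a)"
  shows "(\<forall>z. fa_subst_word f w z \<noteq> 0 \<longrightarrow> key z \<le> key (concat (map ld w))) \<and>
         fa_subst_word f w (concat (map ld w)) = prod_list (map (\<lambda>a. f a (ld a)) w)"
proof (induction w)
  case Nil
  then show ?case by (auto simp: fa_one_def)
next
  case (Cons a w)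
  have A: "\<And>u. f a u \<noteq> 0 \<Longrightarrow> key u \<le> key (ld a)" by (rule ld)
  have B: "\<And>v. fa_subst_word f w v \<noteq> 0 \<Longrightarrow> key v \<le> key (concat (map ld w))" using Cons by blast
  note M = mult_lead[of "f a" "ld a" "fa_subst_word f w" "concat (map ld w)", OF A B]
  show ?case using M Cons by auto
qed

definition supp :: "(word \<Rightarrow> 'k::zero) \<Rightarrow> word set" where "supp p = {w. p w \<noteq> 0}"

definition lead :: "(word \<Rightarrow> 'k::zero) \<Rightarrow> word" where
  "lead p = (SOME w. p w \<noteq> 0 \<and> (\<forall>u. p u \<noteq> 0 \<longrightarrow> key u \<le> key w))"

lemma lead:
  assumes "fa_elem p" "p w0 \<noteq> 0"
  shows "p (lead p) \<noteq> 0" "\<And>u. p u \<noteq> 0 \<Longrightarrow> key u \<le> key (lead p)"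
proof -
  let ?S = "{w. p w \<noteq> 0}"
  have fin: "finite (key ` ?S)" using assms(1) by (simp add: fa_elem_def)
  have ne: "key ` ?S \<noteq> {}" using assms(2) by auto
  obtain w where w: "w \<in> ?S" "key w = Max (key ` ?S)" using Max_in[OF fin ne] by auto
  have "p w \<noteq> 0 \<and> (\<forall>u. p u \<noteq> 0 \<longrightarrow> key u \<le> key w)"
    using w Max_ge[OF fin] by auto
  then have "p (lead p) \<noteq> 0 \<and> (\<forall>u. p u \<noteq> 0 \<longrightarrow> key u \<le> key (lead p))"
    unfolding lead_def by (rule someI)
  then show "p (lead p) \<noteq> 0" "\<And>u. p u \<noteq> 0 \<Longrightarrow> key u \<le> key (lead p)" by auto
qed



definition gg :: "word \<Rightarrow> word \<Rightarrow> var \<Rightarrow> word" where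
  "gg u v a = (case a of X1 \<Rightarrow> u | X2 \<Rightarrow> v)"

abbreviation hh :: "word \<Rightarrow> word \<Rightarrow> var list \<Rightarrow> word" where
  "hh u v m \<equiv> concat (map (gg u v) m)"

fun s1 :: "var \<Rightarrow> var list" where "s1 X1 = [X1]" | "s1 X2 = [X1, X2]"
fun s2 :: "var \<Rightarrow> var list" where "s2 X1 = [X2, X1]" | "s2 X2 = [X2]"

lemma hh_s1: "hh u (u @ w) m = hh u w (concat (map s1 m))"
proof (induction m)
  case (Cons a m) then show ?case by (cases a) (auto simp: gg_def)
qed simp

lemma hh_s2: "hh (v @ w) v m = hh w v (concat (map s2 m))"
proof (induction m)
  case (Cons a m) then show ?case by (cases a) (auto simp: gg_def)
qed simp

lemma s1_hd: "concat (map s1 r) = [] \<or> hd (concat (map s1 r)) = X1"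
proof (cases r)
  case (Cons a r') then show ?thesis by (cases a) auto
qed simp

lemma s2_hd: "concat (map s2 r) = [] \<or> hd (concat (map s2 r)) = X2"
proof (cases r)
  case (Cons a r') then show ?thesis by (cases a) auto
qed simp

lemma hh_Nil: "u \<noteq> [] \<Longrightarrow> v \<noteq> [] \<Longrightarrow> hh u v m = [] \<longleftrightarrow> m = []"
proof (cases m)
  case (Cons a m') then show ?thesis if "u \<noteq> []" "v \<noteq> []" using that by (cases a) (auto simp: gg_def)
qed simp

lemma hh_inj:
  "cnt X1 u * cnt X2 v \<noteq> cnt X2 u * cnt X1 v \<Longrightarrow> hh u v m = hh u v m' \<Longrightarrow> m = m'"
proof (induction "length u + length v" arbitrary: u v m m' rule: less_induct)
  case less
  have un: "u \<noteq> []" using less.prems(1) by auto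
  have vn: "v \<noteq> []" using less.prems(1) by auto
  have clash: False if e: "hh u v (X1 # r) = hh u v (X2 # r')" for r r'
  proof -
    from e have "u @ hh u v r = v @ hh u v r'" by (simp add: gg_def)
    then obtain us where "(u = v @ us \<and> us @ hh u v r = hh u v r') \<or> (u @ us = v \<and> hh u v r = us @ hh u v r')"
      by (auto simp: append_eq_append_conv2)
    then show False
    proof
      assume "u = v @ us \<and> us @ hh u v r = hh u v r'"
      then have uv: "u = v @ us" by simp
      have lt: "length us + length v < length u + length v" using uv vn by simp
      have det: "cnt X1 us * cnt X2 v \<noteq> cnt X2 us * cnt X1 v"
        using less.prems(1) uv by (simp add: algebra_simps)
      have "hh us v (concat (map s2 (X1 # r))) = hh us v (concat (map s2 (X2 # r')))"
        using e uv hh_s2[of v us] by metis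
      then have "concat (map s2 (X1 # r)) = concat (map s2 (X2 # r'))"
        using less.hyps[OF _ det] lt by blast
      then have "concat (map s2 r') = X1 # concat (map s2 r)" by simp
      then show False using s2_hd[of r'] by auto
    next
      assume "u @ us = v \<and> hh u v r = us @ hh u v r'"
      then have uv: "v = u @ us" by simp
      have lt: "length u + length us < length u + length v" using uv un by simp
      have det: "cnt X1 u * cnt X2 us \<noteq> cnt X2 u * cnt X1 us"
        using less.prems(1) uv by (simp add: algebra_simps)
      have "hh u us (concat (map s1 (X1 # r))) = hh u us (concat (map s1 (X2 # r')))"
        using e uv hh_s1[of u us] by metis
      then have "concat (map s1 (X1 # r)) = concat (map s1 (X2 # r'))"
        using less.hyps[OF _ det] lt by blast
      then have "concat (map s1 r) = X2 # concat (map s1 r')" by simp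
      then show False using s1_hd[of r] by auto
    qed
  qed
  have "\<forall>m'. hh u v m = hh u v m' \<longrightarrow> m = m'"
  proof (induction m)
    case Nil then show ?case using hh_Nil[OF un vn] by metis
  next
    case (Cons a r)
    show ?case
    proof (intro allI impI)
      fix m' assume e: "hh u v (a # r) = hh u v m'"
      show "a # r = m'"
      proof (cases m')
        case Nil then show ?thesis using e hh_Nil[OF un vn] by metis
      next
        case (Cons b r')
        show ?thesis
        proof (cases "a = b")
          case True
          then have "hh u v r = hh u v r'" using e Cons by simp
          then show ?thesis using Cons.IH \<open>m' = b # r'\<close> True by simp
        next
          case False
          then have "(a = X1 \<and> b = X2) \<or> (a = X2 \<and> b = X1)" by (cases a; cases b) auto
          then show ?thesis using clash e Cons by metis
        qed
      qed
    qed
  qed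
  then show ?case using less.prems(2) by blast
qed



lemma fa_apply_var:
  fixes f :: "var \<Rightarrow> word \<Rightarrow> 'k::field"
  shows "fa_apply f (fa_var a) = f a"
proof
  fix z
  have "{w. (fa_var a :: word \<Rightarrow> 'k) w \<noteq> 0} = {[a]}" by (auto simp: fa_var_def)
  then show "fa_apply f (fa_var a) z = f a z" by (simp add: fa_apply_def fa_var_def fa_mult_one)
qed

lemma fa_apply_zero: "fa_apply f (\<lambda>_. 0) = (\<lambda>_. 0)"
  by (simp add: fa_apply_def)

lemma single_form:
  fixes p :: "word \<Rightarrow> 'k::field"
  assumes "\<And>w. p w \<noteq> 0 \<Longrightarrow> w = [x]"
  shows "p = fa_smult (p [x]) (fa_var x)"
proof (rule ext)
  fix w show "p w = fa_smult (p [x]) (fa_var x) w"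
    using assms[of w] by (cases "w = [x]") (auto simp: fa_smult_def fa_var_def)
qed

lemma key_lemma:
  fixes f :: "var \<Rightarrow> word \<Rightarrow> 'k::field"
  assumes aut: "fa_aut f"
    and odd: "\<And>u v. f X1 u \<noteq> 0 \<Longrightarrow> f X2 v \<noteq> 0 \<Longrightarrow> odd (cnt X1 u * cnt X2 v + cnt X2 u * cnt X1 v)"
  shows "f \<in> G3"
proof -
  have fin: "\<And>a. fa_elem (f a)" using aut by (simp add: fa_aut_def)
  have bij: "bij_betw (fa_apply f) {p. fa_elem p} {p. fa_elem p}" using aut by (simp add: fa_aut_def)
  have nz: "\<exists>w. f a w \<noteq> 0" for a
  proof (rule ccontr)
    assume "\<not> (\<exists>w. f a w \<noteq> 0)"
    then have "f a = (\<lambda>_. 0)" by auto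
    then have "fa_apply f (fa_var a) = fa_apply f (\<lambda>_. 0)" by (simp add: fa_apply_var fa_apply_zero)
    moreover have "fa_elem (fa_var a :: word \<Rightarrow> 'k)" by (simp add: fa_elem_def fa_var_def)
    moreover have "fa_elem (\<lambda>_. 0 :: 'k)" by (simp add: fa_elem_def)
    ultimately have "(fa_var a :: word \<Rightarrow> 'k) = (\<lambda>_. 0)"
      using bij unfolding bij_betw_def inj_on_def by blast
    then show False by (metis fa_var_def one_neq_zero)
  qed
  define ld where "ld a = lead (f a)" for a
  have ldnz: "f a (ld a) \<noteq> 0" for a using lead(1)[OF fin] nz ld_def by metis
  have ldle: "\<And>a u. f a u \<noteq> 0 \<Longrightarrow> key u \<le> key (ld a)" using lead(2)[OF fin] nz ld_def by metis
  define u1 where "u1 = ld X1"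
  define u2 where "u2 = ld X2"
  have odd12: "odd (cnt X1 u1 * cnt X2 u2 + cnt X2 u1 * cnt X1 u2)"
    using odd ldnz u1_def u2_def by blast
  have det: "cnt X1 u1 * cnt X2 u2 \<noteq> cnt X2 u1 * cnt X1 u2"
  proof
    assume e: "cnt X1 u1 * cnt X2 u2 = cnt X2 u1 * cnt X1 u2"
    then have "cnt X1 u1 * cnt X2 u2 + cnt X2 u1 * cnt X1 u2 = 2 * (cnt X1 u1 * cnt X2 u2)" by simp
    with odd12 show False by simp
  qed
  have u1n: "u1 \<noteq> []" using odd12 by auto
  have u2n: "u2 \<noteq> []" using odd12 by auto
  have ldgg: "ld = gg u1 u2" by (auto simp: gg_def u1_def u2_def split: var.splits)
  have ldn: "ld a \<noteq> []" for a using u1n u2n by (cases a) (auto simp: u1_def u2_def)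
  define H where "H m = concat (map ld m)" for m
  have Hinj: "H m = H m' \<Longrightarrow> m = m'" for m m'
    using hh_inj[OF det] by (simp add: H_def ldgg)
  have SL: "(\<forall>z. fa_subst_word f w z \<noteq> 0 \<longrightarrow> key z \<le> key (H w)) \<and>
         fa_subst_word f w (H w) = prod_list (map (\<lambda>a. f a (ld a)) w)" for w
    unfolding H_def by (rule subst_lead) (rule ldle)
  have hit: "\<exists>a. ld a = [t]" for t
  proof -
    have "fa_elem (fa_var t :: word \<Rightarrow> 'k)" by (simp add: fa_elem_def fa_var_def)
    then obtain p where p: "fa_elem p" "fa_apply f p = fa_var t"
      using bij unfolding bij_betw_def by (metis (no_types, lifting) image_iff mem_Collect_eq)
    define S where "S = {w. p w \<noteq> 0}"
    have finS: "finite S" using p(1) by (simp add: S_def fa_elem_def)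
    have "S \<noteq> {}"
    proof
      assume "S = {}"
      then have "fa_apply f p = (\<lambda>_. 0)" by (simp add: fa_apply_def S_def)
      then have "fa_var t [t] = (0::'k)" using p(2) by metis
      then show False by (simp add: fa_var_def)
    qed
    then have ne: "(key \<circ> H) ` S \<noteq> {}" by simp
    have fin2: "finite ((key \<circ> H) ` S)" using finS by simp
    obtain m where m: "m \<in> S" "key (H m) = Max ((key \<circ> H) ` S)" using Max_in[OF fin2 ne] by auto
    have other: "fa_subst_word f w (H m) = 0" if "w \<in> S" "w \<noteq> m" for w
    proof (rule ccontr)
      assume "fa_subst_word f w (H m) \<noteq> 0"
      then have "key (H m) \<le> key (H w)" using SL by blast
      moreover have "key (H w) \<le> key (H m)" using m(2) Max_ge[OF fin2] that(1) by simp
      ultimately have "H w = H m" using key_inj by (meson antisym)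
      then show False using Hinj that(2) by blast
    qed
    have "fa_apply f p (H m) = (\<Sum>w\<in>S. p w * fa_subst_word f w (H m))"
      by (simp add: fa_apply_def S_def)
    also have "\<dots> = (\<Sum>w\<in>S. if w = m then p m * fa_subst_word f m (H m) else 0)"
      by (rule sum.cong) (auto simp: other)
    also have "\<dots> = p m * fa_subst_word f m (H m)" using finS m(1) by simp
    also have "\<dots> = p m * prod_list (map (\<lambda>a. f a (ld a)) m)" using SL by simp
    finally have "fa_apply f p (H m) \<noteq> 0" using m(1) ldnz
      by (simp add: S_def prod_list_zero_iff) (metis (mono_tags, lifting) image_iff)
    then have Hm: "H m = [t]" using p(2) by (simp add: fa_var_def split: if_splits)
    have "length m \<le> length (H m)" unfolding H_def
    proof (induction m)
      case (Cons a m) then show ?case using ldn[of a] by (simp add: length_greater_0_conv[symmetric] del: length_greater_0_conv)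
    qed simp
    then have "length m \<le> 1" using Hm by simp
    moreover have "m \<noteq> []" using Hm by (auto simp: H_def)
    ultimately obtain a where "m = [a]" by (cases m) auto
    then show ?thesis using Hm by (auto simp: H_def)
  qed
  obtain a where a: "ld a = [X1]" using hit by blast
  obtain b where b: "ld b = [X2]" using hit by blast
  have len1: "f c w \<noteq> 0 \<Longrightarrow> length w \<le> 1" if "ld c = [x]" for c w x
    using ldle[of c w] key_le_length that by fastforce
  have wn1: "f X1 w \<noteq> 0 \<Longrightarrow> w \<noteq> []" for w using odd[of w u2] ldnz u2_def by auto
  have wn2: "f X2 w \<noteq> 0 \<Longrightarrow> w \<noteq> []" for w using odd[of u1 w] ldnz u1_def by auto
  have lett: "length w \<le> 1 \<Longrightarrow> w \<noteq> [] \<Longrightarrow> w = [X1] \<or> w = [X2]" for w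
    by (cases w) (auto intro: var.exhaust)
  have "a = X1 \<and> b = X2 \<or> a = X2 \<and> b = X1" using a b by (cases a; cases b) auto
  then show ?thesis
  proof
    assume ab: "a = X1 \<and> b = X2"
    have f1: "f X1 w \<noteq> 0 \<Longrightarrow> w = [X1]" for w
    proof -
      assume w: "f X1 w \<noteq> 0"
      have "w \<noteq> [X2]" using odd[OF w ldnz[of X2]] ab b by auto
      then show ?thesis using lett[OF len1[of X1 X1 w] wn1] w a ab by auto
    qed
    have f2: "f X2 w \<noteq> 0 \<Longrightarrow> w = [X2]" for w
    proof -
      assume w: "f X2 w \<noteq> 0"
      have "w \<noteq> [X1]" using odd[OF ldnz[of X1] w] ab a by auto
      then show ?thesis using lett[OF len1[of X2 X2 w] wn2] w b ab by auto
    qed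
    have c1: "f X1 [X1] \<noteq> 0" using ldnz[of X1] a ab by simp
    have c2: "f X2 [X2] \<noteq> 0" using ldnz[of X2] b ab by simp
    show ?thesis unfolding G3_def using aut single_form[OF f1] single_form[OF f2] c1 c2 by blast
  next
    assume ab: "a = X2 \<and> b = X1"
    have f1: "f X1 w \<noteq> 0 \<Longrightarrow> w = [X2]" for w
    proof -
      assume w: "f X1 w \<noteq> 0"
      have "w \<noteq> [X1]" using odd[OF w ldnz[of X2]] ab a by auto
      then show ?thesis using lett[OF len1[of X1 X2 w] wn1] w b ab by auto
    qed
    have f2: "f X2 w \<noteq> 0 \<Longrightarrow> w = [X1]" for w
    proof -
      assume w: "f X2 w \<noteq> 0"
      have "w \<noteq> [X2]" using odd[OF ldnz[of X1] w] ab b by auto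
      then show ?thesis using lett[OF len1[of X2 X1 w] wn2] w a ab by auto
    qed
    have c1: "f X1 [X2] \<noteq> 0" using ldnz[of X1] b ab by simp
    have c2: "f X2 [X1] \<noteq> 0" using ldnz[of X2] a ab by simp
    show ?thesis unfolding G3_def using aut single_form[OF f1] single_form[OF f2] c1 c2 by blast
  qed
qed



lemma tens_delta:
  fixes f :: "var \<Rightarrow> word \<Rightarrow> 'k::field"
  shows "tens_apply f (\<lambda>x. if x = (a,b) then c else 0) =
    (\<lambda>(z1,z2). c * fa_subst_word f a z1 * fa_subst_word f b z2)"
proof (cases "c = 0")
  case True then show ?thesis by (simp add: tens_apply_def)
next
  case False
  then have "{uv. (if uv = (a,b) then c else 0) \<noteq> 0} = {(a,b)}" by auto
  then show ?thesis by (simp add: tens_apply_def)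
qed

lemma braid_delta:
  "braid Q (\<lambda>x. if x = (u,v) then 1 else 0) = (\<lambda>x. if x = (v,u) then braid_coeff Q u v else 0)"
  by (auto simp: braid_def)

lemma tens_elem_delta: "tens_elem (\<lambda>x. if x = (u,v) then (1::'k::field) else 0)"
proof -
  have "{uv. (if uv = (u,v) then (1::'k) else 0) \<noteq> 0} = {(u,v)}" by auto
  then show ?thesis by (simp add: tens_elem_def)
qed

lemma braid_cond:
  fixes f :: "var \<Rightarrow> word \<Rightarrow> 'k::field"
  assumes "f \<in> aut_braided Q" "f v z1 \<noteq> 0" "f u z2 \<noteq> 0"
  shows "braid_coeff Q [u] [v] = braid_coeff Q z2 z1"
proof -
  let ?t = "\<lambda>x. if x = ([u],[v]) then (1::'k) else 0"
  have "tens_apply f (braid Q ?t) = braid Q (tens_apply f ?t)"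
    using assms(1) tens_elem_delta unfolding aut_braided_def by blast
  then have "tens_apply f (braid Q ?t) (z1,z2) = braid Q (tens_apply f ?t) (z1,z2)" by simp
  then have "braid_coeff Q [u] [v] * f v z1 * f u z2 = braid_coeff Q z2 z1 * (f u z2 * f v z1)"
    by (simp add: braid_delta tens_delta braid_def fa_mult_one)
  then show ?thesis using assms(2,3) by (simp add: mult.commute mult.left_commute)
qed

lemma neg1_pow:
  assumes "(2::'k::field) \<noteq> 0"
  shows "((-1::'k)^n = -1 \<longleftrightarrow> odd n)" "((-1::'k)^n = 1 \<longleftrightarrow> even n)"
proof -
  have "(1::'k) \<noteq> -1"
  proof
    assume "(1::'k) = -1"
    then have "(2::'k) = 1 + 1" by simp
    also have "\<dots> = 0" using \<open>(1::'k) = -1\<close> by simp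
    finally show False using assms by simp
  qed
  then show "((-1::'k)^n = -1 \<longleftrightarrow> odd n)" "((-1::'k)^n = 1 \<longleftrightarrow> even n)"
    by (auto simp: minus_one_power_iff)
qed

lemma parity_arith:
  fixes a b c d :: nat
  assumes "odd (a*a + b*b)" "odd (c*c + d*d)" "even (a*c + b*d)"
  shows "odd (a*d + b*c)"
  using assms by (cases "even a"; cases "even b"; cases "even c"; cases "even d") auto

lemma aut_braided_sub:
  fixes f :: "var \<Rightarrow> word \<Rightarrow> 'k::field"
  assumes two: "(2::'k) \<noteq> 0"
    and Q: "Q = tau_of (-1) 1 1 (-1) \<or> Q = tau_of 1 (-1) (-1) 1"
    and f: "f \<in> aut_braided Q"
  shows "f \<in> G3"
proof (rule key_lemma)
  show "fa_aut f" using f by (simp add: aut_braided_def)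
  fix u v assume u: "f X1 u \<noteq> 0" and v: "f X2 v \<noteq> 0"
  from Q show "odd (cnt X1 u * cnt X2 v + cnt X2 u * cnt X1 v)"
  proof
    assume Q1: "Q = tau_of (-1) 1 1 (-1)"
    have "braid_coeff Q [X1] [X1] = braid_coeff Q u u" by (rule braid_cond[OF f u u])
    then have "(-1::'k) ^ (cnt X1 u * cnt X1 u + cnt X2 u * cnt X2 u) = -1" by (simp add: Q1 bc1)
    then have o1: "odd (cnt X1 u * cnt X1 u + cnt X2 u * cnt X2 u)"
      using neg1_pow(1)[OF two] by blast
    have "braid_coeff Q [X2] [X2] = braid_coeff Q v v" by (rule braid_cond[OF f v v])
    then have "(-1::'k) ^ (cnt X1 v * cnt X1 v + cnt X2 v * cnt X2 v) = -1" by (simp add: Q1 bc1)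
    then have o2: "odd (cnt X1 v * cnt X1 v + cnt X2 v * cnt X2 v)"
      using neg1_pow(1)[OF two] by blast
    have "braid_coeff Q [X1] [X2] = braid_coeff Q u v" by (rule braid_cond[OF f v u])
    then have "(-1::'k) ^ (cnt X1 u * cnt X1 v + cnt X2 u * cnt X2 v) = 1" by (simp add: Q1 bc1)
    then have e: "even (cnt X1 u * cnt X1 v + cnt X2 u * cnt X2 v)"
      using neg1_pow(2)[OF two] by blast
    show ?thesis using parity_arith[OF o1 o2 e] .
  next
    assume Q2: "Q = tau_of 1 (-1) (-1) 1"
    have "braid_coeff Q [X1] [X2] = braid_coeff Q u v" by (rule braid_cond[OF f v u])
    then have "(-1::'k) ^ (cnt X1 u * cnt X2 v + cnt X2 u * cnt X1 v) = -1" by (simp add: Q2 bc2)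
    then show ?thesis using neg1_pow(1)[OF two] by blast
  qed
qed



lemma subst_form:
  fixes f :: "var \<Rightarrow> word \<Rightarrow> 'k::field"
  assumes "\<And>a. f a = fa_smult (c a) (fa_var (s a))"
  shows "fa_subst_word f w = (\<lambda>z. if z = map s w then prod_list (map c w) else 0)"
proof (induction w)
  case Nil then show ?case by (rule ext) (simp add: fa_one_def)
next
  case (Cons a w)
  have "f a = (\<lambda>z. if z = [s a] then c a else 0)" using assms[of a]
    by (auto simp: fa_smult_def fa_var_def)
  then show ?case using Cons by (intro ext) (simp add: fa_mult_delta)
qed

lemma tens_form:
  fixes f :: "var \<Rightarrow> word \<Rightarrow> 'k::field"
  assumes fs: "\<And>a. f a = fa_smult (c a) (fa_var (s a))" and inv: "\<And>a. s (s a) = a"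
    and t: "tens_elem t"
  shows "tens_apply f t (z1, z2) = t (map s z1, map s z2) * prod_list (map c (map s z1)) * prod_list (map c (map s z2))"
proof -
  let ?P = "\<lambda>w. prod_list (map c w)"
  have mm: "map s (map s w) = w" for w using inv by (induction w) auto
  have iff: "(z = map s u) \<longleftrightarrow> (u = map s z)" for z u using mm by metis
  let ?A = "{uv. t uv \<noteq> 0}"
  have fin: "finite ?A" using t by (simp add: tens_elem_def)
  have "tens_apply f t (z1, z2) = (\<Sum>uv\<in>?A. if uv = (map s z1, map s z2) then t (map s z1, map s z2) * ?P (map s z1) * ?P (map s z2) else 0)"
    unfolding tens_apply_def subst_form[OF fs]
    by (simp, rule sum.cong) (auto simp: iff split: if_splits)
  also have "\<dots> = t (map s z1, map s z2) * ?P (map s z1) * ?P (map s z2)"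
    using sum.delta[OF fin, of "(map s z1, map s z2)" "\<lambda>_. t (map s z1, map s z2) * ?P (map s z1) * ?P (map s z2)"]
    by (cases "t (map s z1, map s z2) = 0") auto
  finally show ?thesis by simp
qed

lemma tens_elem_braid: "tens_elem t \<Longrightarrow> tens_elem (braid Q t)"
proof -
  assume t: "tens_elem t"
  have "{x. braid Q t x \<noteq> 0} \<subseteq> (\<lambda>(a,b). (b,a)) ` {x. t x \<noteq> 0}"
    by (auto simp: braid_def image_iff)
  then show ?thesis using t unfolding tens_elem_def by (meson finite_imageI finite_subset)
qed

lemma braided_form:
  fixes f :: "var \<Rightarrow> word \<Rightarrow> 'k::field"
  assumes fs: "\<And>a. f a = fa_smult (c a) (fa_var (s a))" and inv: "\<And>a. s (s a) = a"
    and bq: "\<And>u v. braid_coeff Q (map s u) (map s v) = braid_coeff Q u v"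
    and t: "tens_elem t"
  shows "tens_apply f (braid Q t) = braid Q (tens_apply f t)"
proof (rule ext, clarify)
  fix z1 z2
  let ?P = "\<lambda>w. prod_list (map c w)"
  have h1: "tens_apply f t (z2, z1) = t (map s z2, map s z1) * ?P (map s z2) * ?P (map s z1)"
    by (rule tens_form[OF fs inv t])
  have h2: "tens_apply f (braid Q t) (z1, z2) = braid Q t (map s z1, map s z2) * ?P (map s z1) * ?P (map s z2)"
    by (rule tens_form[OF fs inv tens_elem_braid[OF t]])
  show "tens_apply f (braid Q t) (z1, z2) = braid Q (tens_apply f t) (z1, z2)"
    using h1 h2 bq[of z2 z1] by (simp add: braid_def mult_ac)
qed

fun sw :: "var \<Rightarrow> var" where "sw X1 = X2" | "sw X2 = X1"

lemma cnt_map_sw: "cnt X1 (map sw w) = cnt X2 w" "cnt X2 (map sw w) = cnt X1 w"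
proof (induction w)
  case (Cons a w) { case 1 show ?case using Cons by (cases a) auto next
                    case 2 show ?case using Cons by (cases a) auto }
qed simp_all

lemma G3_sub:
  fixes f :: "var \<Rightarrow> word \<Rightarrow> 'k::field"
  assumes Q: "Q = tau_of (-1) 1 1 (-1) \<or> Q = tau_of 1 (-1) (-1) 1"
    and f: "f \<in> G3"
  shows "f \<in> aut_braided Q"
proof -
  have aut: "fa_aut f" using f by (simp add: G3_def)
  have bqid: "braid_coeff Q (map id u) (map id v) = braid_coeff Q u v" for u v by simp
  have bqsw: "braid_coeff Q (map sw u) (map sw v) = braid_coeff Q u v" for u v
    using Q by (auto simp: bc1 bc2 cnt_map_sw add_ac mult_ac)
  from f consider (d) a1 b2 where "f X1 = fa_smult a1 (fa_var X1)" "f X2 = fa_smult b2 (fa_var X2)"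
    | (s) b1 a2 where "f X1 = fa_smult b1 (fa_var X2)" "f X2 = fa_smult a2 (fa_var X1)"
    unfolding G3_def by blast
  then show ?thesis
  proof cases
    case d
    let ?c = "\<lambda>a. case a of X1 \<Rightarrow> a1 | X2 \<Rightarrow> b2"
    have fs: "f a = fa_smult (?c a) (fa_var (id a))" for a using d by (cases a) auto
    show ?thesis unfolding aut_braided_def using aut braided_form[OF fs _ bqid] by auto
  next
    case s
    let ?c = "\<lambda>a. case a of X1 \<Rightarrow> b1 | X2 \<Rightarrow> a2"
    have fs: "f a = fa_smult (?c a) (fa_var (sw a))" for a using s by (cases a) auto
    have inv: "sw (sw a) = a" for a by (cases a) auto
    show ?thesis unfolding aut_braided_def using aut braided_form[OF fs inv bqsw] by auto
  qed
qed

theorem lemma4: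
  fixes Q :: "var \<Rightarrow> var \<Rightarrow> 'k::field"
  assumes "(2::'k) \<noteq> 0"
    and "Q = tau_of (-1) 1 1 (-1) \<or> Q = tau_of 1 (-1) (-1) 1"
  shows "aut_braided Q = G3"
  using aut_braided_sub[OF assms] G3_sub[OF assms(2)] by blast


end
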